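(* Let $G$ be a graph with maximum degree $\Delta$, let $\mathrm{col}$ be a partial proper coloring of $G$ with colors in $[\Delta+1]$, let $K$ be an almost-clique of an $\epsilon$-almost-clique decomposition of $G$ (for some $\epsilon\in(0,1/3)$), and let $M$ be a colorful matching in $K$ with respect to $\mathrm{col}$. Then for all $v\in K$, \[ |\Psi_K| \ge |\widehat{K}|+1+e_v-a_v+|M|, \] where $\Psi_K=[\Delta+1]\setminus\mathrm{col}(K)$, $\widehat K$ is the set of uncolored nodes of $K$, $e_v=|N(v)\setminus K|$ and $a_v=|K\setminus N(v)|$.
   Context: A partial coloring is a map $\mathrm{col}:V\to[\Delta+1]\cup\{\bot\}$ ($\bot$ meaning uncolored) such that adjacent nodes that are both colored get different colors; $\mathrm{col}(K)$ is the set of colors assigned to colored nodes of $K$. For $\epsilon\in(0,1/3)$, an $\epsilon$-almost-clique decomposition is a partition of $V$ into $V_{\mathrm{sparse}},K_1,\ldots,K_k$ where nodes in $V_{\mathrm{sparse}}$ are $\Omega(\epsilon^2\Delta)$-sparse (sparsity $\zeta_v=\frac1\Delta(\binom{\Delta}{2}-m(N(v)))$, $m(N(v))$ the number of edges inside the neighborhood $N(v)$) and each almost-clique $K_i$ satisfies $|K_i|\le(1+\epsilon)\Delta$, $|N(v)\cap K_i|\ge(1-\epsilon)\Delta$ for $v\in K_i$, and $|N(v)\cap K_i|\le(1-\epsilon/2)\Delta$ for $v\notin K_i$. An anti-edge is a pair of distinct non-adjacent nodes. A colorful matching in $K$ is a set of pairwise disjoint anti-edges with both endpoints in $K$ such that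 the two endpoints of each anti-edge are colored with the same color, and different anti-edges of the matching have different colors. *)

theory Defs
  imports Complex_Main "HOL-Library.Disjoint_Sets"
begin

definition graph :: "'a set \<Rightarrow> ('a \<Rightarrow> 'a \<Rightarrow> bool) \<Rightarrow> bool" where
  "graph V E \<longleftrightarrow> finite V \<and> (\<forall>u w. E u w \<longrightarrow> u \<in> V \<and> w \<in> V)
     \<and> (\<forall>u w. E u w \<longrightarrow> E w u) \<and> (\<forall>u. \<not> E u u)"

definition nbhd :: "'a set \<Rightarrow> ('a \<Rightarrow> 'a \<Rightarrow> bool) \<Rightarrow> 'a \<Rightarrow> 'a set" where
  "nbhd V E v = {u \<in> V. E v u}"

definition max_degree :: "'a set \<Rightarrow> ('a \<Rightarrow> 'a \<Rightarrow> bool) \<Rightarrow> nat" where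
  "max_degree V E = Max ({card (nbhd V E v) | v. v \<in> V} \<union> {0})"

text \<open>Partial proper colouring with colours in [\<Delta>+1] = {1..\<Delta>+1}; None = uncoloured.\<close>
definition partial_coloring ::
  "'a set \<Rightarrow> ('a \<Rightarrow> 'a \<Rightarrow> bool) \<Rightarrow> nat \<Rightarrow> ('a \<Rightarrow> nat option) \<Rightarrow> bool" where
  "partial_coloring V E \<Delta> col \<longleftrightarrow>
     (\<forall>v \<in> V. \<forall>c. col v = Some c \<longrightarrow> c \<in> {1..\<Delta>+1})
     \<and> (\<forall>u \<in> V. \<forall>w \<in> V. E u w \<and> col u \<noteq> None \<and> col w \<noteq> None \<longrightarrow> col u \<noteq> col w)"

definition col_set :: "('a \<Rightarrow> nat option) \<Rightarrow> 'a set \<Rightarrow> nat set" where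
  "col_set col K = {c. \<exists>v \<in> K. col v = Some c}"

definition edges_in :: "('a \<Rightarrow> 'a \<Rightarrow> bool) \<Rightarrow> 'a set \<Rightarrow> nat" where
  "edges_in E S = card {{x, y} | x y. x \<in> S \<and> y \<in> S \<and> E x y}"

definition sparsity :: "'a set \<Rightarrow> ('a \<Rightarrow> 'a \<Rightarrow> bool) \<Rightarrow> 'a \<Rightarrow> real" where
  "sparsity V E v = (let \<Delta> = max_degree V E in
     (1 / real \<Delta>) * (real (\<Delta> choose 2) - real (edges_in E (nbhd V E v))))"

text \<open>\<epsilon>-almost-clique decomposition; the hidden constant of \<Omega>(\<epsilon>^2 \<Delta>) is the explicit c.\<close>
definition acd :: "'a set \<Rightarrow> ('a \<Rightarrow> 'a \<Rightarrow> bool) \<Rightarrow> real \<Rightarrow> real \<Rightarrow> 'a set \<Rightarrow> 'a set set \<Rightarrow> bool" where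
  "acd V E \<epsilon> c Vs Ks \<longleftrightarrow>
     (let \<Delta> = max_degree V E in
       Vs \<subseteq> V \<and> (\<forall>K \<in> Ks. K \<noteq> {} \<and> K \<subseteq> V \<and> Vs \<inter> K = {}) \<and> disjoint Ks
       \<and> Vs \<union> \<Union>Ks = V
       \<and> (\<forall>v \<in> Vs. sparsity V E v \<ge> c * \<epsilon>^2 * real \<Delta>)
       \<and> (\<forall>K \<in> Ks. real (card K) \<le> (1 + \<epsilon>) * real \<Delta>
            \<and> (\<forall>v \<in> K. real (card (nbhd V E v \<inter> K)) \<ge> (1 - \<epsilon>) * real \<Delta>)
            \<and> (\<forall>v \<in> V - K. real (card (nbhd V E v \<inter> K)) \<le> (1 - \<epsilon>/2) * real \<Delta>)))"

definition anti_edge :: "('a \<Rightarrow> 'a \<Rightarrow> bool) \<Rightarrow> 'a \<Rightarrow> 'a \<Rightarrow> bool" where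
  "anti_edge E u w \<longleftrightarrow> u \<noteq> w \<and> \<not> E u w"

definition colorful_matching ::
  "('a \<Rightarrow> 'a \<Rightarrow> bool) \<Rightarrow> ('a \<Rightarrow> nat option) \<Rightarrow> 'a set \<Rightarrow> 'a set set \<Rightarrow> bool" where
  "colorful_matching E col K M \<longleftrightarrow>
     (\<forall>e \<in> M. \<exists>u w. e = {u, w} \<and> anti_edge E u w \<and> u \<in> K \<and> w \<in> K
                   \<and> col u \<noteq> None \<and> col u = col w)
     \<and> disjoint M
     \<and> (\<forall>e \<in> M. \<forall>e' \<in> M. \<forall>x \<in> e. \<forall>y \<in> e'. e \<noteq> e' \<longrightarrow> col x \<noteq> col y)"

end

theory Submission
  imports Defs
begin

lemma matching_bound:
  assumes fin: "finite K"
    and cm: "colorful_matching E col K M"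
  shows "card (col_set col K) + card M \<le> card {u \<in> K. col u \<noteq> None}"
proof -
  define C where "C = {u \<in> K. col u \<noteq> None}"
  define f where "f = (\<lambda>e::'a set. SOME x. x \<in> e)"
  have edge: "\<And>e. e \<in> M \<Longrightarrow> \<exists>u w. e = {u, w} \<and> u \<noteq> w \<and> u \<in> K \<and> w \<in> K
                   \<and> col u \<noteq> None \<and> col u = col w"
  proof -
    fix e assume eM: "e \<in> M"
    have e0: "\<forall>e\<in>M. \<exists>u w. e = {u, w} \<and> anti_edge E u w \<and> u \<in> K \<and> w \<in> K
                   \<and> col u \<noteq> None \<and> col u = col w"
      using cm unfolding colorful_matching_def by (elim conjE) assumption
    obtain u w where uw: "e = {u, w}" "anti_edge E u w" "u \<in> K" "w \<in> K"
        "col u \<noteq> None" "col u = col w"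
      using bspec[OF e0 eM] by (elim exE conjE) (rule that)
    show "\<exists>u w. e = {u, w} \<and> u \<noteq> w \<and> u \<in> K \<and> w \<in> K \<and> col u \<noteq> None \<and> col u = col w"
      by (intro exI[of _ u] exI[of _ w]) (use uw in \<open>simp add: anti_edge_def\<close>)
  qed
  have dis: "\<And>e e'. e \<in> M \<Longrightarrow> e' \<in> M \<Longrightarrow> e \<noteq> e' \<Longrightarrow> e \<inter> e' = {}"
  proof -
    fix e e' assume a: "e \<in> M" "e' \<in> M" "e \<noteq> e'"
    have "disjoint M" using cm unfolding colorful_matching_def by simp
    then show "e \<inter> e' = {}" using a unfolding pairwise_def disjnt_def by simp
  qed
  have fe: "\<And>e. e \<in> M \<Longrightarrow> f e \<in> e"
  proof -
    fix e assume "e \<in> M"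
    then have "e \<noteq> {}" using edge by blast
    then show "f e \<in> e" unfolding f_def by (simp add: some_in_eq)
  qed
  have eC: "\<And>e. e \<in> M \<Longrightarrow> e \<subseteq> C"
  proof -
    fix e assume "e \<in> M"
    then obtain u w where "e = {u, w}" "u \<noteq> w" "u \<in> K" "w \<in> K" "col u \<noteq> None" "col u = col w"
      using edge by blast
    then show "e \<subseteq> C" unfolding C_def by auto
  qed
  define R where "R = f ` M"
  have RC: "R \<subseteq> C"
  proof
    fix x assume "x \<in> R"
    then obtain e where "e \<in> M" "x = f e" unfolding R_def by auto
    then show "x \<in> C" using fe[of e] eC[of e] by auto
  qed
  have inj: "inj_on f M"
  proof (rule inj_onI)
    fix e e' assume "e \<in> M" "e' \<in> M" "f e = f e'"
    then show "e = e'" using fe[of e] fe[of e'] dis[of e e'] by (rule_tac ccontr) auto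
  qed
  have finC: "finite C" using fin unfolding C_def by simp
  have finM: "finite M"
  proof -
    have "M \<subseteq> Pow C" using eC by blast
    then show ?thesis by (rule finite_subset) (simp add: finC)
  qed
  have cardR: "card R = card M" unfolding R_def using card_image[OF inj] .
  have img: "col_set col K \<subseteq> (\<lambda>u. the (col u)) ` (C - R)"
  proof
    fix c assume "c \<in> col_set col K"
    then obtain u where u: "u \<in> K" "col u = Some c" unfolding col_set_def by blast
    show "c \<in> (\<lambda>u. the (col u)) ` (C - R)"
    proof (cases "u \<in> R")
      case False
      then show ?thesis using u unfolding C_def by force
    next
      case True
      then obtain e where e: "e \<in> M" "u = f e" unfolding R_def by blast
      from edge[OF e(1)] obtain a b where ab: "e = {a, b}" "a \<noteq> b" "a \<in> K" "b \<in> K"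
        "col a \<noteq> None" "col a = col b" by blast
      have ue: "u \<in> e" using e fe by simp
      obtain w where w: "w \<in> e" "w \<noteq> u" "col w = col u"
      proof (cases "u = a")
        case True
        then show ?thesis using that[of b] ab by simp
      next
        case False
        then have "u = b" using ue ab by simp
        then show ?thesis using that[of a] ab by simp
      qed
      have "w \<notin> R"
      proof
        assume "w \<in> R"
        then obtain e' where e': "e' \<in> M" "w = f e'" unfolding R_def by blast
        then have "w \<in> e'" using fe by blast
        then have "e' = e" using dis[OF e'(1) e(1)] w(1) by (rule_tac ccontr) auto
        then show False using w e e' by simp
      qed
      moreover have "w \<in> C" using w e eC by blast
      ultimately show ?thesis using w u by force
    qed
  qed
  have "card (col_set col K) \<le> card ((\<lambda>u. the (col u)) ` (C - R))"
    using img finC by (simp add: card_mono)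
  also have "\<dots> \<le> card (C - R)" by (rule card_image_le) (use finC in simp)
  also have "\<dots> = card C - card M" using RC finC cardR
    by (simp add: card_Diff_subset finite_subset)
  finally have "card (col_set col K) \<le> card C - card M" .
  moreover have "card M \<le> card C" using card_mono[OF finC RC] cardR by simp
  ultimately show ?thesis unfolding C_def by linarith
qed

theorem claim2p1:
  fixes V :: "'a set" and E :: "'a \<Rightarrow> 'a \<Rightarrow> bool" and col :: "'a \<Rightarrow> nat option"
    and \<epsilon> c :: real and Vs K :: "'a set" and Ks M :: "'a set set" and v :: 'a
  assumes "graph V E"
    and "partial_coloring V E (max_degree V E) col"
    and "0 < \<epsilon>" and "\<epsilon> < 1/3" and "0 < c"
    and "acd V E \<epsilon> c Vs Ks" and "K \<in> Ks"
    and "colorful_matching E col K M"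
    and "v \<in> K"
  shows "int (card ({1..max_degree V E + 1} - col_set col K))
     \<ge> int (card {u \<in> K. col u = None}) + 1 + int (card (nbhd V E v - K))
        - int (card (K - nbhd V E v)) + int (card M)"
proof -
  define D where "D = max_degree V E"
  have finV: "finite V" using assms(1) unfolding graph_def by blast
  have KsV: "\<forall>K\<in>Ks. K \<noteq> {} \<and> K \<subseteq> V \<and> Vs \<inter> K = {}"
    using assms(6) unfolding acd_def Let_def by (elim conjE) assumption
  have KV: "K \<subseteq> V" using KsV assms(7) by simp
  have finK: "finite K" using finV KV finite_subset by blast
  have vV: "v \<in> V" using KV assms(9) by blast
  have deg: "card (nbhd V E v) \<le> D"
  proof -
    have "finite ({card (nbhd V E v) | v. v \<in> V} \<union> {0})" using finV by simp
    then show ?thesis unfolding D_def max_degree_def using vV by (intro Max_ge) auto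
  qed
  have finN: "finite (nbhd V E v)" using finV unfolding nbhd_def by simp
  have "card (nbhd V E v) = card (nbhd V E v \<inter> K) + card (nbhd V E v - K)"
    using finN by (metis card_Int_Diff)
  moreover have "card K = card (nbhd V E v \<inter> K) + card (K - nbhd V E v)"
    using finK by (metis card_Int_Diff inf_commute)
  ultimately have d1: "int (card K) - int (card (K - nbhd V E v)) + int (card (nbhd V E v - K)) \<le> int D"
    using deg by linarith
  have ck: "card K = card {u \<in> K. col u = None} + card {u \<in> K. col u \<noteq> None}"
  proof -
    have "K = {u \<in> K. col u = None} \<union> {u \<in> K. col u \<noteq> None}" by blast
    moreover have "card ({u \<in> K. col u = None} \<union> {u \<in> K. col u \<noteq> None})
       = card {u \<in> K. col u = None} + card {u \<in> K. col u \<noteq> None}"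
      by (rule card_Un_disjoint) (use finK in auto)
    ultimately show ?thesis by simp
  qed
  have mb: "card (col_set col K) + card M \<le> card {u \<in> K. col u \<noteq> None}"
    using matching_bound[OF finK assms(8)] .
  have sub: "col_set col K \<subseteq> {1..D + 1}"
  proof
    fix x assume "x \<in> col_set col K"
    then obtain u where "u \<in> K" "col u = Some x" unfolding col_set_def by blast
    moreover have "u \<in> V" using KV \<open>u \<in> K\<close> by blast
    moreover have pc: "\<forall>v \<in> V. \<forall>c. col v = Some c \<longrightarrow> c \<in> {1..D+1}"
      using assms(2) unfolding partial_coloring_def D_def by (elim conjE) assumption
    ultimately show "x \<in> {1..D + 1}" by simp
  qed
  have "card ({1..D + 1} - col_set col K) = card {1..D+1} - card (col_set col K)"
    using sub by (simp add: card_Diff_subset finite_subset)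
  moreover have "card (col_set col K) \<le> card {1..D+1}" using sub by (intro card_mono) auto
  ultimately have "int (card ({1..D + 1} - col_set col K)) = int (D + 1) - int (card (col_set col K))"
    by simp
  then have fin: "int (card ({1..D + 1} - col_set col K)) = int (D + 1) - int (card (col_set col K))" .
  have mb': "int (card (col_set col K)) + int (card M) \<le> int (card {u \<in> K. col u \<noteq> None})"
    using mb by linarith
  have ck': "int (card K) = int (card {u \<in> K. col u = None}) + int (card {u \<in> K. col u \<noteq> None})"
    using ck by simp
  have "int (card {u \<in> K. col u = None}) + 1 + int (card (nbhd V E v - K))
        - int (card (K - nbhd V E v)) + int (card M) \<le> int (card ({1..D + 1} - col_set col K))"
    unfolding fin using d1 mb' ck' by linarith
  then show ?thesis unfolding D_def .
qed

end
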